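(* Let $p\in(0,1]$ and let $X_i$, $Y_i$, $S_\rho$, $S$ be as follows: $X_1,\dots,X_n$ i.i.d. $\mathcal N(0,1)$, $Y_1\ge\dots\ge Y_n$ the non-increasing rearrangement of $|X_1|^p,\dots,|X_n|^p$, $S_\rho=\sum_{i=1}^{\lceil\rho n\rceil}Y_i$, $S=\mathbb E[S_1]$. For every $\rho<\rho^*(p)$ there exist $\delta>0$ and $c_2>0$ such that for all sufficiently large $n$, with probability at least $1-2e^{-c_2n}$, $S_\rho\le(\tfrac12-\delta)S$.
   Context: Let $f(z)=\sqrt{2/\pi}\,e^{-z^2/2}$ for $z\ge0$; $z^*(p)>0$ satisfies $\int_0^{z^*}x^pf(x)\,dx=\int_{z^*}^\infty x^pf(x)\,dx$ and $\rho^*(p)=1-\operatorname{erf}(z^*(p)/\sqrt2)$. *)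

theory Defs
  imports "HOL-Probability.Probability"
begin

definition half_normal :: "real \<Rightarrow> real" where
  "half_normal z = sqrt (2 / pi) * exp (- (z\<^sup>2) / 2)"

definition erf :: "real \<Rightarrow> real" where
  "erf x = 2 / sqrt pi * integral {0..x} (\<lambda>t. exp (- (t\<^sup>2)))"

definition zstar :: "real \<Rightarrow> real" where
  "zstar p = (THE z. z > 0 \<and>
     integral {0..z} (\<lambda>x. x powr p * half_normal x) = integral {z..} (\<lambda>x. x powr p * half_normal x))"

definition rhostar :: "real \<Rightarrow> real" where
  "rhostar p = 1 - erf (zstar p / sqrt 2)"

definition std_gauss :: "real measure" where
  "std_gauss = density lborel std_normal_density"

definition gauss_vec :: "nat \<Rightarrow> (nat \<Rightarrow> real) measure" where
  "gauss_vec n = PiM {..<n} (\<lambda>_. std_gauss)"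

definition Ys :: "real \<Rightarrow> nat \<Rightarrow> (nat \<Rightarrow> real) \<Rightarrow> real list" where
  "Ys p n \<omega> = rev (sort (map (\<lambda>i. \<bar>\<omega> i\<bar> powr p) [0..<n]))"

definition S_rho :: "real \<Rightarrow> nat \<Rightarrow> real \<Rightarrow> (nat \<Rightarrow> real) \<Rightarrow> real" where
  "S_rho p n \<rho> \<omega> = sum_list (take (nat \<lceil>\<rho> * real n\<rceil>) (Ys p n \<omega>))"

definition S_mean :: "real \<Rightarrow> nat \<Rightarrow> real" where
  "S_mean p n = (\<integral>\<omega>. S_rho p n 1 \<omega> \<partial>gauss_vec n)"

end

theory Submission
  imports Defs "HOL-Combinatorics.Permutations"
begin

lemma sum_list_filter_upt:
  "sum_list (filter P (map f [0..<n])) = (\<Sum>i<n. if P (f i) then f i else (0::real))"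
  by (induction n) auto

lemma length_filter_upt:
  "length (filter P (map f [0..<n])) = card {i\<in>{..<n}. P (f i)}"
proof (induction n)
  case 0 then show ?case by simp
next
  case (Suc n)
  have "{i\<in>{..<Suc n}. P (f i)} = {i\<in>{..<n}. P (f i)} \<union> (if P (f n) then {n} else {})"
    by (auto simp: less_Suc_eq)
  then show ?case using Suc by (auto simp: card_insert_if)
qed

lemma sum_list_Ys: "sum_list (Ys p n \<omega>) = (\<Sum>i<n. \<bar>\<omega> i\<bar> powr p)"
proof -
  have "sum_list (Ys p n \<omega>) = sum_list (map (\<lambda>i. \<bar>\<omega> i\<bar> powr p) [0..<n])"
    unfolding Ys_def by (metis mset_rev mset_sort sum_mset_sum_list)
  also have "\<dots> = (\<Sum>i<n. \<bar>\<omega> i\<bar> powr p)"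
    by (simp add: sum_list_sum_nth atLeast0LessThan)
  finally show ?thesis .
qed

lemma length_Ys[simp]: "length (Ys p n \<omega>) = n"
  by (simp add: Ys_def)

lemma topk_le:
  fixes f :: "nat \<Rightarrow> real"
  assumes nn: "\<And>i. 0 \<le> f i"
    and k: "k \<le> card {i\<in>{..<n}. T \<le> f i}"
  shows "sum_list (take k (rev (sort (map f [0..<n])))) \<le> (\<Sum>i<n. if T \<le> f i then f i else 0)"
proof -
  define xs where "xs = map f [0..<n]"
  define L where "L = rev (sort xs)"
  define P where "P = (\<lambda>v::real. T \<le> v)"
  have msetL: "mset L = mset xs" by (simp add: L_def)
  have sortedL: "sorted_wrt (\<ge>) L" by (simp add: L_def sorted_wrt_rev)
  have lenL: "length L = n" by (simp add: L_def xs_def)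
  have cnt: "length (filter P L) = card {i\<in>{..<n}. T \<le> f i}"
  proof -
    have "length (filter P L) = length (filter P xs)"
      by (metis msetL mset_filter size_mset)
    then show ?thesis using length_filter_upt[of P f n] unfolding xs_def P_def by simp
  qed
  have allP: "\<forall>v\<in>set (take k L). P v"
  proof
    fix v assume "v \<in> set (take k L)"
    then obtain j where j: "j < length (take k L)" "take k L ! j = v"
      by (auto simp: in_set_conv_nth)
    have jk: "j < k" "j < n" using j lenL by auto
    have vL: "v = L ! j" using j by simp
    show "P v"
    proof (rule ccontr)
      assume nP: "\<not> P v"
      have "\<forall>w\<in>set (drop j L). \<not> P w"
      proof
        fix w assume "w \<in> set (drop j L)"
        then obtain j' where j': "j' < length (drop j L)" "drop j L ! j' = w"
          by (auto simp: in_set_conv_nth)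
        have "L ! (j + j') \<le> L ! j"
          using sortedL j' jk lenL
          by (cases "j' = 0") (auto simp: sorted_wrt_iff_nth_less)
        then show "\<not> P w" using nP j' vL by (auto simp: P_def)
      qed
      then have "filter P (drop j L) = []" by (simp add: filter_empty_conv)
      then have "filter P L = filter P (take j L)"
        by (metis append_Nil2 append_take_drop_id filter_append)
      then have "length (filter P L) \<le> j"
        by (metis length_filter_le length_take min.bounded_iff nle_le)
      then show False using cnt k jk by simp
    qed
  qed
  have "sum_list (take k L) = sum_list (filter P (take k L))"
    using allP by (metis filter_True)
  also have "\<dots> \<le> sum_list (filter P (take k L)) + sum_list (filter P (drop k L))"
  proof -
    have "0 \<le> sum_list (filter P (drop k L))"
    proof (rule sum_list_nonneg)
      fix x assume "x \<in> set (filter P (drop k L))"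
      then have "x \<in> set L" by (auto dest: in_set_dropD)
      then have "x \<in> set xs" by (metis msetL set_mset_mset)
      then show "0 \<le> x" by (auto simp: xs_def nn)
    qed
    then show ?thesis by simp
  qed
  also have "\<dots> = sum_list (filter P L)"
    by (metis append_take_drop_id filter_append sum_list_append)
  also have "\<dots> = sum_list (filter P xs)"
    by (metis msetL mset_filter sum_mset_sum_list)
  also have "\<dots> = (\<Sum>i<n. if T \<le> f i then f i else 0)"
    by (simp add: xs_def sum_list_filter_upt P_def)
  finally show ?thesis by (simp add: L_def xs_def)
qed

lemma space_gauss_vec: "space (gauss_vec n) = PiE {..<n} (\<lambda>_. UNIV)"
  by (simp add: gauss_vec_def space_PiM std_gauss_def)

lemma sets_std_gauss[measurable_cong]: "sets std_gauss = sets borel"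
  by (simp add: std_gauss_def)

lemma comp_meas:
  assumes "i < n"
  shows "(\<lambda>\<omega>. \<omega> i) \<in> borel_measurable (gauss_vec n)"
proof -
  have "(\<lambda>\<omega>. \<omega> i) \<in> measurable (gauss_vec n) std_gauss"
    unfolding gauss_vec_def using assms by (intro measurable_component_singleton) auto
  then show ?thesis by (simp add: measurable_def sets_std_gauss std_gauss_def)
qed

lemma sum_take_rev_map:
  "sum_list (take k (rev (map g [0..<n]))) = (\<Sum>j<min k n. g (n - Suc j))"
  by (simp add: sum_list_sum_nth rev_nth atLeast0LessThan min.commute)

lemma meas_Srho:
  "{\<omega> \<in> space (gauss_vec n). S_rho p n \<rho> \<omega> \<le> K} \<in> sets (gauss_vec n)"
proof -
  define k where "k = nat \<lceil>\<rho> * real n\<rceil>"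
  define f where "f = (\<lambda>\<omega> (i::nat). \<bar>\<omega> i\<bar> powr p)"
  define A where "A = (\<lambda>\<pi>. {\<omega> \<in> space (gauss_vec n).
       (\<forall>j\<in>{..<n}. \<forall>j'\<in>{..<n}. j \<le> j' \<longrightarrow> f \<omega> (\<pi> j) \<le> f \<omega> (\<pi> j')) \<and>
       (\<Sum>j<min k n. f \<omega> (\<pi> (n - Suc j))) \<le> K})"
  have Ysf: "Ys p n \<omega> = rev (sort (map (f \<omega>) [0..<n]))" for \<omega>
    by (simp add: Ys_def f_def)
  have perm_eq: "permute_list \<pi> (map (f \<omega>) [0..<n]) = map (\<lambda>j. f \<omega> (\<pi> j)) [0..<n]"
    if "\<pi> permutes {..<n}" for \<pi> \<omega>
  proof -
    have "\<pi> x < n" if "x < n" for x using permutes_in_image[OF \<open>\<pi> permutes {..<n}\<close>] that by auto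
    then show ?thesis by (auto simp: permute_list_def intro!: nth_equalityI)
  qed
  have eq: "{\<omega> \<in> space (gauss_vec n). S_rho p n \<rho> \<omega> \<le> K} = (\<Union>\<pi>\<in>{\<pi>. \<pi> permutes {..<n}}. A \<pi>)"
  proof (intro equalityI subsetI)
    fix \<omega> assume w: "\<omega> \<in> {\<omega> \<in> space (gauss_vec n). S_rho p n \<rho> \<omega> \<le> K}"
    obtain \<pi> where pi: "\<pi> permutes {..<length (map (f \<omega>) [0..<n])}"
      "permute_list \<pi> (map (f \<omega>) [0..<n]) = sort (map (f \<omega>) [0..<n])"
      using mset_eq_permutation[of "sort (map (f \<omega>) [0..<n])" "map (f \<omega>) [0..<n]"] by auto
    have pi1: "\<pi> permutes {..<n}" using pi by simp
    have L: "map (\<lambda>j. f \<omega> (\<pi> j)) [0..<n] = sort (map (f \<omega>) [0..<n])"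
      using pi(2) perm_eq[OF pi1] by simp
    have s: "sorted (map (\<lambda>j. f \<omega> (\<pi> j)) [0..<n])" by (simp only: L) simp
    have c1: "\<forall>j\<in>{..<n}. \<forall>j'\<in>{..<n}. j \<le> j' \<longrightarrow> f \<omega> (\<pi> j) \<le> f \<omega> (\<pi> j')"
      using s by (auto simp: sorted_iff_nth_mono)
    have "S_rho p n \<rho> \<omega> = (\<Sum>j<min k n. f \<omega> (\<pi> (n - Suc j)))"
      unfolding S_rho_def Ysf k_def[symmetric] L[symmetric] sum_take_rev_map ..
    then show "\<omega> \<in> (\<Union>\<pi>\<in>{\<pi>. \<pi> permutes {..<n}}. A \<pi>)"
      using w c1 pi1 by (auto simp: A_def)
  next
    fix \<omega> assume "\<omega> \<in> (\<Union>\<pi>\<in>{\<pi>. \<pi> permutes {..<n}}. A \<pi>)"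
    then obtain \<pi> where pi1: "\<pi> permutes {..<n}" and w: "\<omega> \<in> A \<pi>" by auto
    have s: "sorted (map (\<lambda>j. f \<omega> (\<pi> j)) [0..<n])"
      using w by (auto simp: A_def sorted_iff_nth_mono)
    have m: "mset (map (\<lambda>j. f \<omega> (\<pi> j)) [0..<n]) = mset (map (f \<omega>) [0..<n])"
      using perm_eq[OF pi1, of \<omega>] mset_permute_list[of \<pi> "map (f \<omega>) [0..<n]"] pi1 by simp
    have L: "map (\<lambda>j. f \<omega> (\<pi> j)) [0..<n] = sort (map (f \<omega>) [0..<n])"
      using properties_for_sort[OF m s] by simp
    have "S_rho p n \<rho> \<omega> = (\<Sum>j<min k n. f \<omega> (\<pi> (n - Suc j)))"
      unfolding S_rho_def Ysf k_def[symmetric] L[symmetric] sum_take_rev_map ..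
    then show "\<omega> \<in> {\<omega> \<in> space (gauss_vec n). S_rho p n \<rho> \<omega> \<le> K}"
      using w by (auto simp: A_def)
  qed
  have fm: "(\<lambda>\<omega>. f \<omega> i) \<in> borel_measurable (gauss_vec n)" if "i < n" for i
    unfolding f_def by (rule measurable_compose[OF comp_meas[OF that]]) measurable
  have "A \<pi> \<in> sets (gauss_vec n)" if pi: "\<pi> permutes {..<n}" for \<pi>
  proof -
    have lt: "j < n \<Longrightarrow> \<pi> j < n" for j using pi permutes_in_image by fastforce
    have lt2: "j < min k n \<Longrightarrow> \<pi> (n - Suc j) < n" for j using lt by simp
    have m1: "Measurable.pred (gauss_vec n) (\<lambda>\<omega>. \<forall>j\<in>{..<n}. \<forall>j'\<in>{..<n}. j \<le> j' \<longrightarrow> f \<omega> (\<pi> j) \<le> f \<omega> (\<pi> j'))"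
    proof -
      have "Measurable.pred (gauss_vec n) (\<lambda>\<omega>. f \<omega> (\<pi> j) \<le> f \<omega> (\<pi> j'))" if "j<n" "j'<n" for j j'
        unfolding pred_def using fm[OF lt[OF that(1)]] fm[OF lt[OF that(2)]] by (rule borel_measurable_le)
      then show ?thesis by (intro pred_intros_finite pred_intros_logic) auto
    qed
    have m2: "(\<lambda>\<omega>. \<Sum>j<min k n. f \<omega> (\<pi> (n - Suc j))) \<in> borel_measurable (gauss_vec n)"
      by (intro borel_measurable_sum fm lt2) auto
    have m3: "Measurable.pred (gauss_vec n) (\<lambda>\<omega>. (\<Sum>j<min k n. f \<omega> (\<pi> (n - Suc j))) \<le> K)"
      unfolding pred_def using m2 by (rule borel_measurable_le) simp
    show ?thesis unfolding A_def using m1 m3 by measurable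
  qed
  moreover have "finite {\<pi>. \<pi> permutes {..<n}}" by (simp add: finite_permutations)
  ultimately show ?thesis unfolding eq by (intro sets.finite_UN) auto
qed

lemma exp_quad: "exp (y::real) \<le> 1 + y + y\<^sup>2 * exp \<bar>y\<bar>"
proof (cases "y \<ge> 0")
  case True
  have a: "exp y - 1 \<le> y * exp y"
  proof -
    have "1 - y \<le> exp (-y)" using exp_ge_add_one_self[of "-y"] by simp
    then have "exp y * (1 - y) \<le> exp y * exp (-y)" by (intro mult_left_mono) auto
    then show ?thesis by (simp add: exp_minus field_simps)
  qed
  have "exp y - 1 - y \<le> y * (exp y - 1)" using a by (simp add: algebra_simps)
  also have "\<dots> \<le> y * (y * exp y)" using a True by (intro mult_left_mono) auto
  finally show ?thesis using True by (simp add: power2_eq_square algebra_simps)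
next
  case False
  define s where "s = -y"
  have s: "s > 0" using False s_def by simp
  have b: "1 - exp (-s) \<le> s" using exp_ge_add_one_self[of "-s"] by simp
  have c: "s * exp (-s) \<le> 1 - exp (-s)"
  proof -
    have "1 + s \<le> exp s" by (rule exp_ge_add_one_self)
    then have "(1 + s) * exp (-s) \<le> exp s * exp (-s)" by (intro mult_right_mono) auto
    then show ?thesis by (simp add: exp_minus field_simps)
  qed
  have "exp (-s) - 1 + s \<le> s * (1 - exp (-s))" using c by (simp add: algebra_simps)
  also have "\<dots> \<le> s * s" using b s by (intro mult_left_mono) auto
  also have "\<dots> \<le> s * s * exp \<bar>y\<bar>" using s by simp
  finally show ?thesis by (simp add: s_def power2_eq_square algebra_simps)
qed

lemma abs_le_quad: "\<bar>y::real\<bar> \<le> 1 + y\<^sup>2 * exp \<bar>y\<bar>"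
proof -
  have "\<bar>y\<bar> \<le> 1 + y\<^sup>2"
  proof (cases "\<bar>y\<bar> \<le> 1")
    case True then show ?thesis by (simp add: add_increasing2)
  next
    case False
    then have "\<bar>y\<bar> * 1 \<le> \<bar>y\<bar> * \<bar>y\<bar>" by (intro mult_left_mono) auto
    then show ?thesis by (simp add: power2_eq_square)
  qed
  also have "y\<^sup>2 \<le> y\<^sup>2 * exp \<bar>y\<bar>" using mult_left_mono[of 1 "exp \<bar>y\<bar>" "y\<^sup>2"] by simp
  finally show ?thesis by simp
qed

lemma prob_space_std_gauss: "prob_space std_gauss"
  unfolding std_gauss_def by (rule prob_space_normal_density) simp

lemma space_std_gauss[simp]: "space std_gauss = UNIV"
  by (simp add: std_gauss_def)

lemma prob_space_gauss_vec: "prob_space (gauss_vec n)"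
  unfolding gauss_vec_def by (intro prob_space_PiM prob_space_std_gauss)

lemma chernoff:
  fixes g :: "real \<Rightarrow> real" and \<eta> :: real
  assumes gm[measurable]: "g \<in> borel_measurable borel"
    and int: "integrable std_gauss (\<lambda>x. (g x)\<^sup>2 * exp \<bar>g x\<bar>)"
    and \<eta>: "\<eta> > 0"
  shows "\<exists>c>0. \<forall>n. measure (gauss_vec n)
     {\<omega> \<in> space (gauss_vec n). real n * (integral\<^sup>L std_gauss g + \<eta>) \<le> (\<Sum>i<n. g (\<omega> i))}
       \<le> exp (- c * real n)"
proof -
  interpret G: prob_space std_gauss by (rule prob_space_std_gauss)
  have gm'[measurable]: "g \<in> borel_measurable std_gauss" by (simp add: std_gauss_def)
  define C where "C = integral\<^sup>L std_gauss (\<lambda>x. (g x)\<^sup>2 * exp \<bar>g x\<bar>)"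
  define Eg where "Eg = integral\<^sup>L std_gauss g"
  have C0: "0 \<le> C" unfolding C_def by (intro integral_nonneg_AE) auto
  define l where "l = min 1 (\<eta> / (2 * (C + 1)))"
  have l0: "0 < l" using \<eta> C0 by (simp add: l_def)
  have l1: "l \<le> 1" by (simp add: l_def)
  have lC: "l * C \<le> \<eta> / 2"
  proof -
    have "l * C \<le> \<eta> / (2 * (C + 1)) * C" using C0 by (intro mult_right_mono) (auto simp: l_def)
    also have "\<dots> \<le> \<eta> / 2" using C0 \<eta> by (simp add: field_simps)
    finally show ?thesis .
  qed
  have intg: "integrable std_gauss g"
    by (rule Bochner_Integration.integrable_bound[OF Bochner_Integration.integrable_add[OF G.integrable_const[of 1] int]])
       (auto intro!: AE_I2 simp: gm' intro: order.trans[OF abs_le_quad])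
  have pw: "exp (l * g x) \<le> 1 + l * g x + l\<^sup>2 * ((g x)\<^sup>2 * exp \<bar>g x\<bar>)" for x
  proof -
    have "exp (l * g x) \<le> 1 + l * g x + (l * g x)\<^sup>2 * exp \<bar>l * g x\<bar>" by (rule exp_quad)
    also have "(l * g x)\<^sup>2 * exp \<bar>l * g x\<bar> \<le> (l * g x)\<^sup>2 * exp \<bar>g x\<bar>"
      using l0 l1 by (intro mult_left_mono) (auto simp: abs_mult mult_left_le_one_le)
    finally show ?thesis by (simp add: power_mult_distrib)
  qed
  have intR: "integrable std_gauss (\<lambda>x. 1 + l * g x + l\<^sup>2 * ((g x)\<^sup>2 * exp \<bar>g x\<bar>))"
    using intg int by auto
  have intE: "integrable std_gauss (\<lambda>x. exp (l * g x))"
    by (rule Bochner_Integration.integrable_bound[OF intR]) (auto intro!: AE_I2 order.trans[OF pw abs_ge_self])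
  define m where "m = integral\<^sup>L std_gauss (\<lambda>x. exp (l * g x))"
  have m0: "0 \<le> m" unfolding m_def by (intro integral_nonneg_AE) auto
  have mle: "m \<le> exp (l * Eg + l\<^sup>2 * C)"
  proof -
    have "m \<le> integral\<^sup>L std_gauss (\<lambda>x. 1 + l * g x + l\<^sup>2 * ((g x)\<^sup>2 * exp \<bar>g x\<bar>))"
      unfolding m_def by (intro integral_mono intE intR pw)
    also have "\<dots> = 1 + l * Eg + l\<^sup>2 * C"
      using intg int G.prob_space by (simp add: Eg_def C_def)
    also have "\<dots> \<le> exp (l * Eg + l\<^sup>2 * C)" by (simp add: exp_ge_add_one_self add.assoc)
    finally show ?thesis .
  qed
  define c where "c = l * \<eta> / 2"
  have c0: "c > 0" using l0 \<eta> by (simp add: c_def)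
  have main: "measure (gauss_vec n)
     {\<omega> \<in> space (gauss_vec n). real n * (Eg + \<eta>) \<le> (\<Sum>i<n. g (\<omega> i))} \<le> exp (- c * real n)" for n
  proof -
    interpret P: prob_space "gauss_vec n" by (rule prob_space_gauss_vec)
    interpret PS: product_sigma_finite "\<lambda>_. std_gauss"
      unfolding product_sigma_finite_def by (auto intro: G.sigma_finite_measure)
    have gi[measurable]: "(\<lambda>\<omega>. g (\<omega> i)) \<in> borel_measurable (gauss_vec n)" if "i < n" for i
      by (rule measurable_compose[OF comp_meas[OF that] gm])
    define A where "A = {\<omega> \<in> space (gauss_vec n). real n * (Eg + \<eta>) \<le> (\<Sum>i<n. g (\<omega> i))}"
    define K where "K = l * (real n * (Eg + \<eta>))"
    have sumM: "(\<lambda>\<omega>. \<Sum>i<n. g (\<omega> i)) \<in> borel_measurable (gauss_vec n)"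
      by (intro borel_measurable_sum gi) auto
    have Am: "A \<in> sets (gauss_vec n)" unfolding A_def using sumM by (intro borel_measurable_le) auto
    have "emeasure (gauss_vec n) A = (\<integral>\<^sup>+\<omega>. indicator A \<omega> \<partial>gauss_vec n)"
      using Am by simp
    also have "\<dots> \<le> (\<integral>\<^sup>+\<omega>. ennreal (exp (- K)) * (\<Prod>i\<in>{..<n}. ennreal (exp (l * g (\<omega> i)))) \<partial>gauss_vec n)"
    proof (intro nn_integral_mono)
      fix \<omega> assume "\<omega> \<in> space (gauss_vec n)"
      have eq: "ennreal (exp (- K)) * (\<Prod>i\<in>{..<n}. ennreal (exp (l * g (\<omega> i))))
          = ennreal (exp (l * (\<Sum>i<n. g (\<omega> i)) - K))"
        by (simp add: prod_ennreal ennreal_mult[symmetric] exp_sum[symmetric] sum_distrib_left exp_diff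
              exp_minus field_simps)
      show "indicator A \<omega> \<le> ennreal (exp (- K)) * (\<Prod>i\<in>{..<n}. ennreal (exp (l * g (\<omega> i))))"
      proof (cases "\<omega> \<in> A")
        case True
        then have "K \<le> l * (\<Sum>i<n. g (\<omega> i))" using l0 unfolding A_def K_def
          by (intro mult_left_mono) auto
        then have "1 \<le> exp (l * (\<Sum>i<n. g (\<omega> i)) - K)" by simp
        then show ?thesis using True eq by (simp add: indicator_def)
      qed (simp add: indicator_def)
    qed
    also have "\<dots> = ennreal (exp (- K)) * (\<integral>\<^sup>+\<omega>. (\<Prod>i\<in>{..<n}. ennreal (exp (l * g (\<omega> i)))) \<partial>gauss_vec n)"
      by (intro nn_integral_cmult) (auto intro!: borel_measurable_prod_ennreal)
    also have "(\<integral>\<^sup>+\<omega>. (\<Prod>i\<in>{..<n}. ennreal (exp (l * g (\<omega> i)))) \<partial>gauss_vec n)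
        = (\<Prod>i\<in>{..<n}. (\<integral>\<^sup>+x. ennreal (exp (l * g x)) \<partial>std_gauss))"
      unfolding gauss_vec_def
      by (rule PS.product_nn_integral_prod[where f="\<lambda>i x. ennreal (exp (l * g x))"]) (auto simp: gm')
    also have "(\<integral>\<^sup>+x. ennreal (exp (l * g x)) \<partial>std_gauss) = ennreal m"
      unfolding m_def by (intro nn_integral_eq_integral intE) auto
    also have "(\<Prod>i\<in>{..<n}. ennreal m) = ennreal (m ^ n)"
      using m0 by (simp add: ennreal_power)
    also have "ennreal (exp (- K)) * ennreal (m ^ n) = ennreal (exp (- K) * m ^ n)"
      using m0 by (simp add: ennreal_mult)
    also have "exp (- K) * m ^ n \<le> exp (- c * real n)"
    proof -
      have "m ^ n \<le> exp (l * Eg + l\<^sup>2 * C) ^ n" using m0 mle by (intro power_mono) auto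
      also have "\<dots> = exp (real n * (l * Eg + l\<^sup>2 * C))" by (simp add: exp_of_nat_mult)
      finally have "exp (- K) * m ^ n \<le> exp (- K) * exp (real n * (l * Eg + l\<^sup>2 * C))"
        by (intro mult_left_mono) auto
      also have "\<dots> = exp (real n * (l\<^sup>2 * C - l * \<eta>))"
        by (simp add: K_def exp_add[symmetric] algebra_simps)
      also have "\<dots> \<le> exp (- c * real n)"
      proof -
        have "l\<^sup>2 * C = l * (l * C)" by (simp add: power2_eq_square)
        also have "\<dots> \<le> l * (\<eta> / 2)" using l0 lC by (intro mult_left_mono) auto
        finally have "l\<^sup>2 * C - l * \<eta> \<le> - c" by (simp add: c_def)
        then have "real n * (l\<^sup>2 * C - l * \<eta>) \<le> real n * (- c)" by (intro mult_left_mono) auto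
        then show ?thesis by (simp add: mult.commute)
      qed
      finally show ?thesis .
    qed
    finally have "emeasure (gauss_vec n) A \<le> ennreal (exp (- c * real n))"
      by (simp add: ennreal_leI del: mult_minus_left)
    then show ?thesis unfolding A_def[symmetric]
      by (simp add: P.emeasure_eq_measure)
  qed
  show ?thesis using c0 main unfolding Eg_def by blast
qed

abbreviation phi :: "real \<Rightarrow> real" where "phi \<equiv> std_normal_density"

lemma hn_eq: "half_normal x = 2 * phi x"
proof -
  have "sqrt (2 / pi) = 2 / sqrt (2 * pi)"
  proof -
    have "sqrt (2/pi) * sqrt (2 * pi) = 2"
      by (simp add: real_sqrt_mult[symmetric])
    then show ?thesis by (simp add: field_simps)
  qed
  then show ?thesis by (simp add: half_normal_def std_normal_density_def)
qed

lemma int_dens: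
  "f \<in> borel_measurable borel \<Longrightarrow> integral\<^sup>L std_gauss f = (\<integral>x. phi x * f x \<partial>lborel)"
  unfolding std_gauss_def by (subst integral_density) auto

lemma integrable_dens:
  "f \<in> borel_measurable borel \<Longrightarrow> integrable std_gauss f \<longleftrightarrow> integrable lborel (\<lambda>x. phi x * f x)"
  unfolding std_gauss_def by (subst integrable_density) auto

lemma dom_int: "integrable lborel (\<lambda>x. phi x * exp (10 + x\<^sup>2 / 4))"
proof -
  have eq: "phi x * exp (10 + x\<^sup>2 / 4) = exp 10 * sqrt 2 * normal_density 0 (sqrt 2) x" for x
  proof -
    have e1: "exp (- x\<^sup>2 / 2) * exp (10 + x\<^sup>2 / 4) = exp (- x\<^sup>2 / 2 + (10 + x\<^sup>2 / 4))"
      by (rule mult_exp_exp)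
    have e2: "exp 10 * exp (- x\<^sup>2 / 4) = exp (10 + - x\<^sup>2 / 4)" by (rule mult_exp_exp)
    have e3: "- x\<^sup>2 / 2 + (10 + x\<^sup>2 / 4) = 10 + - x\<^sup>2 / 4" by simp
    have "phi x * exp (10 + x\<^sup>2 / 4) = (1 / sqrt (2 * pi)) * (exp (- x\<^sup>2 / 2) * exp (10 + x\<^sup>2 / 4))"
      unfolding std_normal_density_def by (simp only: mult.assoc)
    then have "phi x * exp (10 + x\<^sup>2 / 4) = exp 10 * (1 / sqrt (2 * pi)) * exp (- x\<^sup>2 / 4)"
      by (simp only: e1 e3 e2[symmetric] mult_ac)
    moreover have "normal_density 0 (sqrt 2) x = 1 / (sqrt 2 * sqrt (2 * pi)) * exp (- x\<^sup>2 / 4)"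
      by (simp add: normal_density_def real_sqrt_mult)
    moreover have "sqrt 2 * (1 / (sqrt 2 * sqrt (2 * pi))) = 1 / sqrt (2 * pi)" by simp
    ultimately show ?thesis by (metis (no_types, opaque_lifting) mult.assoc mult.commute)
  qed
  show ?thesis unfolding eq by (intro integrable_mult_right) simp
qed

lemma intg_bound:
  assumes [measurable]: "F \<in> borel_measurable borel" and b: "\<And>x. \<bar>F x\<bar> \<le> exp (10 + x\<^sup>2 / 4)"
  shows "integrable std_gauss F"
proof -
  have "integrable lborel (\<lambda>x. phi x * F x)"
    by (rule Bochner_Integration.integrable_bound[OF dom_int])
       (auto intro!: AE_I2 mult_left_mono b simp: abs_mult normal_density_nonneg)
  then show ?thesis by (simp add: integrable_dens)
qed

lemma big_bound:
  assumes "\<bar>y::real\<bar> \<le> 1 + \<bar>x\<bar>"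
  shows "y\<^sup>2 * exp \<bar>y\<bar> \<le> exp (10 + x\<^sup>2 / 4)"
proof -
  have "\<bar>y\<bar>\<^sup>2 \<le> (1 + \<bar>x\<bar>)\<^sup>2" by (rule power_mono[OF assms]) simp
  then have "y\<^sup>2 \<le> (1 + \<bar>x\<bar>)\<^sup>2" by simp
  also have "\<dots> \<le> (exp \<bar>x\<bar>)\<^sup>2" by (intro power_mono exp_ge_add_one_self) auto
  also have "\<dots> = exp (2 * \<bar>x\<bar>)" by (simp only: power2_eq_square mult_exp_exp mult_2)
  finally have a: "y\<^sup>2 \<le> exp (2 * \<bar>x\<bar>)" .
  have b: "exp \<bar>y\<bar> \<le> exp (1 + \<bar>x\<bar>)" using assms by simp
  have "y\<^sup>2 * exp \<bar>y\<bar> \<le> exp (2 * \<bar>x\<bar>) * exp (1 + \<bar>x\<bar>)"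
    using a b by (intro mult_mono) auto
  also have "\<dots> = exp (1 + 3 * \<bar>x\<bar>)" by (simp add: mult_exp_exp)
  also have "\<dots> \<le> exp (10 + x\<^sup>2 / 4)"
  proof -
    have "0 \<le> (\<bar>x\<bar> / 2 - 3)\<^sup>2" by simp
    then have "1 + 3 * \<bar>x\<bar> \<le> 10 + x\<^sup>2 / 4" by (simp add: power2_eq_square field_simps)
    then show ?thesis by simp
  qed
  finally show ?thesis .
qed

lemma powr_le_lin:
  assumes "0 < p" "p \<le> 1"
  shows "\<bar>x::real\<bar> powr p \<le> 1 + \<bar>x\<bar>"
proof (cases "\<bar>x\<bar> \<le> 1")
  case True
  then have "\<bar>x\<bar> powr p \<le> 1 powr p" using assms by (intro powr_mono2) auto
  then show ?thesis by simp
next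
  case False
  then have "\<bar>x\<bar> powr p \<le> \<bar>x\<bar> powr 1" using assms by (intro powr_mono) auto
  then show ?thesis using False by simp
qed

lemma sym:
  fixes F :: "real \<Rightarrow> real"
  assumes [measurable]: "F \<in> borel_measurable borel" and ev: "\<And>x. F (- x) = F x"
    and int: "integrable lborel F"
  shows "integral\<^sup>L lborel F = 2 * (\<integral>x. indicator {0..} x * F x \<partial>lborel)"
proof -
  have i1: "integrable lborel (\<lambda>x. indicator {0..} x * F x)"
    using integrable_mult_indicator[OF _ int, of "{0..}"] by simp
  have i2: "integrable lborel (\<lambda>x. indicator {..<0} x * F x)"
    using integrable_mult_indicator[OF _ int, of "{..<0}"] by simp
  have "integral\<^sup>L lborel F = (\<integral>x. indicator {0..} x * F x + indicator {..<0} x * F x \<partial>lborel)"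
    by (intro Bochner_Integration.integral_cong) (auto simp: indicator_def)
  also have "\<dots> = (\<integral>x. indicator {0..} x * F x \<partial>lborel) + (\<integral>x. indicator {..<0} x * F x \<partial>lborel)"
    using i1 i2 by simp
  also have "(\<integral>x. indicator {..<0} x * F x \<partial>lborel) = (\<integral>x. indicator {..<0} (0 + (-1) * x) * F (0 + (-1) * x) \<partial>lborel)"
    using lborel_integral_real_affine[of "-1" "\<lambda>x. indicator {..<0} x * F x" 0] by simp
  also have "\<dots> = (\<integral>x. indicator {0<..} x * F x \<partial>lborel)"
    by (intro Bochner_Integration.integral_cong) (auto simp: indicator_def ev)
  also have "\<dots> = (\<integral>x. indicator {0..} x * F x \<partial>lborel)"
  proof -
    have "AE x in lborel. indicator {0<..} x * F x = indicator {0..} x * F x"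
      using AE_lborel_singleton[of 0] by eventually_elim (auto simp: indicator_def)
    then show ?thesis by (intro integral_cong_AE) auto
  qed
  finally show ?thesis by simp
qed

lemma phi_even: "phi (- x) = phi x"
  by (simp add: std_normal_density_def)

lemma LINT_H:
  fixes f :: "real \<Rightarrow> real"
  assumes "set_integrable lborel S f"
  shows "(\<integral>x. indicator S x * f x \<partial>lborel) = integral S f" "f integrable_on S"
  using set_borel_integral_eq_integral[OF assms] unfolding set_lebesgue_integral_def by auto

lemma E_rad:
  fixes k :: "real \<Rightarrow> real"
  assumes [measurable]: "k \<in> borel_measurable borel" and t: "0 \<le> t"
    and int: "integrable lborel (\<lambda>x. phi x * (if t \<le> \<bar>x\<bar> then k \<bar>x\<bar> else 0))"
  shows "integral\<^sup>L std_gauss (\<lambda>x. if t \<le> \<bar>x\<bar> then k \<bar>x\<bar> else 0)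
       = (\<integral>x. indicator {t..} x * (2 * phi x * k x) \<partial>lborel)"
proof -
  have "integral\<^sup>L std_gauss (\<lambda>x. if t \<le> \<bar>x\<bar> then k \<bar>x\<bar> else 0)
      = (\<integral>x. phi x * (if t \<le> \<bar>x\<bar> then k \<bar>x\<bar> else 0) \<partial>lborel)"
    by (rule int_dens) measurable
  also have "\<dots> = 2 * (\<integral>x. indicator {0..} x * (phi x * (if t \<le> \<bar>x\<bar> then k \<bar>x\<bar> else 0)) \<partial>lborel)"
    by (rule sym) (auto simp: int phi_even)
  also have "\<dots> = (\<integral>x. 2 * (indicator {0..} x * (phi x * (if t \<le> \<bar>x\<bar> then k \<bar>x\<bar> else 0))) \<partial>lborel)"
    by simp
  also have "\<dots> = (\<integral>x. indicator {t..} x * (2 * phi x * k x) \<partial>lborel)"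
    using t by (intro Bochner_Integration.integral_cong) (auto simp: indicator_def)
  finally show ?thesis .
qed

lemma setint_h:
  assumes p: "0 < p" "p \<le> 1"
  shows "set_integrable lborel {0..} (\<lambda>x. x powr p * half_normal x)"
proof -
  have "integrable lborel (\<lambda>x. 2 * (phi x + phi x * \<bar>x\<bar> ^ 1))"
    using integrable_std_normal_moment_abs[of 1] by auto
  then show ?thesis unfolding set_integrable_def
  proof (rule Bochner_Integration.integrable_bound)
    show "(\<lambda>x. indicator {0..} x *\<^sub>R (x powr p * half_normal x)) \<in> borel_measurable lborel"
      unfolding half_normal_def by measurable
    show "AE x in lborel. norm (indicator {0..} x *\<^sub>R (x powr p * half_normal x))
        \<le> norm (2 * (phi x + phi x * \<bar>x\<bar> ^ 1))"
    proof (intro AE_I2)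
      fix x :: real
      show "norm (indicator {0..} x *\<^sub>R (x powr p * half_normal x))
        \<le> norm (2 * (phi x + phi x * \<bar>x\<bar> ^ 1))"
      proof (cases "x \<ge> 0")
        case True
        have "\<bar>x powr p\<bar> \<le> 1 + \<bar>x\<bar>"
          using powr_le_lin[OF p, of x] True by auto
        then have "\<bar>x powr p * half_normal x\<bar> \<le> (1 + \<bar>x\<bar>) * (2 * phi x)"
          by (auto simp: abs_mult hn_eq intro!: mult_right_mono)
        then show ?thesis using True
          by (auto simp: indicator_def algebra_simps abs_mult)
      qed (auto simp: indicator_def)
    qed
  qed
qed

lemma setint_phi: "set_integrable lborel {0..} (\<lambda>x. 2 * phi x)"
  unfolding set_integrable_def
  by (rule Bochner_Integration.integrable_bound[where f="\<lambda>x. 2 * phi x"])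
     (auto intro!: AE_I2 simp: indicator_def)

lemma split_H:
  fixes f :: "real \<Rightarrow> real"
  assumes si: "set_integrable lborel {0..} f" and [measurable]: "f \<in> borel_measurable borel" and z: "0 \<le> z"
  shows "integral {0..} f = integral {0..z} f + integral {z..} f"
proof -
  have s1: "set_integrable lborel {0..<z} f" by (rule set_integrable_subset[OF si]) auto
  have s2: "set_integrable lborel {z..} f" by (rule set_integrable_subset[OF si]) (use z in auto)
  have s3: "set_integrable lborel {0..z} f" by (rule set_integrable_subset[OF si]) auto
  have "integral {0..} f = (LINT x:{0..<z} \<union> {z..}|lborel. f x)"
    using z set_borel_integral_eq_integral(2)[OF si] by (simp add: ivl_disj_un)
  also have "\<dots> = (LINT x:{0..<z}|lborel. f x) + (LINT x:{z..}|lborel. f x)"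
    by (rule set_integral_Un[OF _ s1 s2]) auto
  also have "(LINT x:{0..<z}|lborel. f x) = (LINT x:{0..z}|lborel. f x)"
  proof (rule set_integral_cong_set)
    show "AE x in lborel. (x \<in> {0..z}) = (x \<in> {0..<z})"
      using AE_lborel_singleton[of z] by eventually_elim auto
  qed (auto simp: set_borel_measurable_def)
  finally show ?thesis using set_borel_integral_eq_integral(2)[OF s2] set_borel_integral_eq_integral(2)[OF s3]
    by simp
qed

context
  fixes p :: real
  assumes p: "0 < p" "p \<le> 1"
begin

abbreviation hh :: "real \<Rightarrow> real" where "hh \<equiv> (\<lambda>x. x powr p * half_normal x)"

lemma hh_meas[measurable]: "hh \<in> borel_measurable borel"
  unfolding half_normal_def by measurable

lemma hh_nonneg: "0 \<le> x \<Longrightarrow> 0 \<le> hh x"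
  by (simp add: half_normal_def)

lemma hh_si: "S \<in> sets borel \<Longrightarrow> S \<subseteq> {0..} \<Longrightarrow> set_integrable lborel S hh"
  by (rule set_integrable_subset[OF setint_h[OF p]]) auto

lemma hh_int_on: "0 \<le> a \<Longrightarrow> hh integrable_on {a..b}"
  by (rule LINT_H(2)[OF hh_si]) auto

lemma hh_int_on2: "0 \<le> a \<Longrightarrow> hh integrable_on {a..}"
  by (rule LINT_H(2)[OF hh_si]) auto

lemma I1I2: "0 \<le> z \<Longrightarrow> integral {0..} hh = integral {0..z} hh + integral {z..} hh"
  by (rule split_H[OF setint_h[OF p]]) auto

lemma I2_nonneg: "0 \<le> z \<Longrightarrow> 0 \<le> integral {z..} hh"
  by (rule integral_nonneg[OF hh_int_on2]) (auto intro: hh_nonneg)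

lemma hh_pos:
  assumes "0 \<le> a" "a < b"
  shows "0 < integral {a..b} hh"
proof -
  define m where "m = (a + b) / 2"
  have m: "0 < m" "a \<le> m" "m \<le> b" "m < b" using assms by (auto simp: m_def)
  define \<kappa> where "\<kappa> = m powr p * half_normal b"
  have k: "0 < \<kappa>" using m by (simp add: \<kappa>_def half_normal_def)
  have "integral {a..m} hh + integral {m..b} hh = integral {a..b} hh"
    using Henstock_Kurzweil_Integration.integral_combine[where f=hh and a=a and c=m and b=b] m assms hh_int_on[of a b] by auto
  moreover have "0 \<le> integral {a..m} hh"
    using assms by (intro integral_nonneg hh_int_on) (auto intro: hh_nonneg)
  moreover have "integral {m..b} (\<lambda>x. \<kappa>) \<le> integral {m..b} hh"
  proof (rule integral_le)
    show "(\<lambda>x. \<kappa>) integrable_on {m..b}" by (rule integrable_const_ivl)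
    show "hh integrable_on {m..b}" using m by (intro hh_int_on) auto
    fix x assume x: "x \<in> {m..b}"
    have "m powr p \<le> x powr p" using x m p by (intro powr_mono2) auto
    moreover have "half_normal b \<le> half_normal x"
      using x m by (simp add: half_normal_def power_mono)
    ultimately show "\<kappa> \<le> hh x" unfolding \<kappa>_def
      by (intro mult_mono) (auto simp: half_normal_def)
  qed
  moreover have "integral {m..b} (\<lambda>x. \<kappa>) = (b - m) * \<kappa>" using m by simp
  moreover have "0 < (b - m) * \<kappa>" using m k by simp
  ultimately show ?thesis by linarith
qed

lemma I1_strict: "0 \<le> z1 \<Longrightarrow> z1 < z2 \<Longrightarrow> integral {0..z1} hh < integral {0..z2} hh"
  using Henstock_Kurzweil_Integration.integral_combine[where f=hh and a=0 and c=z1 and b=z2] hh_int_on[of 0 z2] hh_pos[of z1 z2] by auto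

lemma mu_pos: "0 < integral {0..} hh"
  using I1I2[of 1] I2_nonneg[of 1] hh_pos[of 0 1] by simp

lemma tail_bound: "\<exists>B\<ge>0. \<forall>Z\<ge>1. integral {Z..} hh \<le> B / Z"
proof -
  define F where "F = (\<lambda>x. 2 * (phi x * \<bar>x\<bar> ^ 1 + phi x * \<bar>x\<bar> ^ 2))"
  have Fi: "integrable lborel F" unfolding F_def
    using integrable_std_normal_moment_abs[of 1] integrable_std_normal_moment_abs[of 2] by auto
  define B where "B = integral\<^sup>L lborel F"
  have B0: "0 \<le> B" unfolding B_def F_def by (intro integral_nonneg_AE) auto
  have "integral {Z..} hh \<le> B / Z" if Z: "Z \<ge> 1" for Z
  proof -
    have si: "set_integrable lborel {Z..} hh" using Z by (intro hh_si) auto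
    have "integral {Z..} hh = (\<integral>x. indicator {Z..} x * hh x \<partial>lborel)"
      using LINT_H(1)[OF si] by simp
    also have "\<dots> \<le> (\<integral>x. F x / Z \<partial>lborel)"
    proof (rule integral_mono)
      show "integrable lborel (\<lambda>x. indicator {Z..} x * hh x)" using si by (simp add: set_integrable_def)
      show "integrable lborel (\<lambda>x. F x / Z)" using Fi by simp
      fix x :: real
      show "indicator {Z..} x * hh x \<le> F x / Z"
      proof (cases "Z \<le> x")
        case True
        then have x0: "0 \<le> x" "1 \<le> x / Z" using Z by auto
        have "x powr p \<le> 1 + x" using powr_le_lin[OF p, of x] x0 by simp
        then have "hh x \<le> (1 + x) * (2 * phi x)"
          by (auto simp: hn_eq intro!: mult_right_mono)
        also have "\<dots> \<le> (x / Z) * ((1 + x) * (2 * phi x))"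
          using mult_right_mono[OF x0(2), of "(1 + x) * (2 * phi x)"] x0 by simp
        also have "\<dots> = F x / Z" using x0 by (simp add: F_def power2_eq_square field_simps)
        finally show ?thesis using True by simp
      next
        case False
        have "0 \<le> F x" unfolding F_def by simp
        then show ?thesis using False Z by (simp add: indicator_def)
      qed
    qed
    also have "\<dots> = B / Z" by (simp add: B_def)
    finally show ?thesis .
  qed
  then show ?thesis using B0 by blast
qed

lemma zstar_prop:
  "zstar p > 0 \<and> integral {0..zstar p} hh = integral {zstar p..} hh"
proof -
  define P where "P = (\<lambda>z. z > 0 \<and> integral {0..z} hh = integral {z..} hh)"
  define \<mu> where "\<mu> = integral {0..} hh"
  have mu: "0 < \<mu>" using mu_pos by (simp add: \<mu>_def)
  have Pi: "P z \<longleftrightarrow> z > 0 \<and> integral {0..z} hh = \<mu> / 2" for z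
    using I1I2[of z] by (auto simp: P_def \<mu>_def)
  obtain B where B: "B \<ge> 0" "\<And>Z. Z \<ge> 1 \<Longrightarrow> integral {Z..} hh \<le> B / Z"
    using tail_bound by blast
  define Z where "Z = 1 + 2 * B / \<mu>"
  have Z1: "Z \<ge> 1" using B mu by (simp add: Z_def)
  have "B / Z < \<mu> / 2"
  proof -
    have "B < \<mu> / 2 * Z" using B mu by (simp add: Z_def field_simps)
    then show ?thesis using Z1 by (simp add: field_simps)
  qed
  then have "integral {Z..} hh < \<mu> / 2" using B(2)[OF Z1] by linarith
  then have IZ: "\<mu> / 2 \<le> integral {0..Z} hh" using I1I2[of Z] Z1 by (simp add: \<mu>_def)
  have cont: "continuous_on {0..Z} (\<lambda>z. integral {0..z} hh)"
    by (rule indefinite_integral_continuous_1[OF hh_int_on]) simp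
  obtain z where z: "0 \<le> z" "z \<le> Z" "integral {0..z} hh = \<mu> / 2"
    using IVT'[of "\<lambda>z. integral {0..z} hh" 0 "\<mu>/2" Z, OF _ IZ _ cont] mu Z1 by auto
  have "z \<noteq> 0" using z mu by auto
  then have Pz: "P z" using z Pi by auto
  have uniq: "y = z" if "P y" for y
  proof -
    have y: "y > 0" "integral {0..y} hh = \<mu> / 2" using that Pi by auto
    show ?thesis
    proof (rule ccontr)
      assume "y \<noteq> z"
      then consider "y < z" | "z < y" by linarith
      then show False
      proof cases
        case 1 then show False using I1_strict[of y z] y z by auto
      next
        case 2 then show False using I1_strict[of z y] y z by auto
      qed
    qed
  qed
  have "P (THE z. P z)" by (rule theI[of P z, OF Pz uniq])
  then show ?thesis unfolding zstar_def P_def by simp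
qed

lemma tail_lt_half:
  assumes "zstar p < t"
  shows "integral {t..} hh < integral {0..} hh / 2"
proof -
  have z: "zstar p > 0" "integral {0..zstar p} hh = integral {zstar p..} hh" using zstar_prop by auto
  have a: "integral {0..} hh = 2 * integral {0..zstar p} hh" using I1I2[of "zstar p"] z by simp
  have "integral {0..zstar p} hh < integral {0..t} hh" using I1_strict[of "zstar p" t] z assms by simp
  then show ?thesis using I1I2[of t] z assms a by simp
qed

end

lemma erf_eq:
  assumes z: "0 \<le> z"
  shows "erf (z / sqrt 2) = integral {0..z} (\<lambda>x. 2 * phi x)"
proof -
  define m :: real where "m = 1 / sqrt 2"
  have m0: "m \<noteq> 0" by (simp add: m_def)
  have img: "(\<lambda>x. x / m) ` {0..z / sqrt 2} = {0..z}"
  proof (intro equalityI subsetI)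
    fix y assume "y \<in> (\<lambda>x. x / m) ` {0..z / sqrt 2}"
    then obtain x where x: "x \<in> {0..z / sqrt 2}" "y = x / m" by auto
    then show "y \<in> {0..z}" by (auto simp: m_def field_simps)
  next
    fix y assume y: "y \<in> {0..z}"
    have "y / sqrt 2 \<in> {0..z / sqrt 2}" using y by (auto simp: divide_right_mono)
    moreover have "y = (y / sqrt 2) / m" by (simp add: m_def)
    ultimately show "y \<in> (\<lambda>x. x / m) ` {0..z / sqrt 2}" by blast
  qed
  have fm: "exp (- (m * x)\<^sup>2) = exp (- x\<^sup>2 / 2)" for x
    by (simp add: m_def power_mult_distrib power_divide)
  have st0: "integral {0..z} (\<lambda>x. exp (- x\<^sup>2 / 2)) = (1 / \<bar>m\<bar>) *\<^sub>R integral {0..z / sqrt 2} (\<lambda>t. exp (- t\<^sup>2))"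
    using integral_stretch_real[OF m0, where f="\<lambda>t. exp (- t\<^sup>2)" and a=0 and b="z / sqrt 2"] unfolding img fm .
  have m1: "1 / \<bar>m\<bar> = sqrt 2" by (simp add: m_def)
  have st: "integral {0..z} (\<lambda>x. exp (- x\<^sup>2 / 2)) = sqrt 2 * integral {0..z / sqrt 2} (\<lambda>t. exp (- t\<^sup>2))"
    using st0 unfolding m1 by simp
  have "integral {0..z} (\<lambda>x. 2 * phi x) = 2 / sqrt (2 * pi) * integral {0..z} (\<lambda>x. exp (- x\<^sup>2 / 2))"
    by (simp add: std_normal_density_def)
  also have "\<dots> = 2 / sqrt (2 * pi) * sqrt 2 * integral {0..z / sqrt 2} (\<lambda>t. exp (- t\<^sup>2))"
    by (simp only: st mult.assoc)
  also have "2 / sqrt (2 * pi) * sqrt 2 = 2 / sqrt pi" by (simp add: real_sqrt_mult)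
  finally show ?thesis by (simp add: erf_def)
qed

lemma setint_phi_sub: "S \<in> sets borel \<Longrightarrow> S \<subseteq> {0..} \<Longrightarrow> set_integrable lborel S (\<lambda>x. 2 * phi x)"
  by (rule set_integrable_subset[OF setint_phi]) auto

lemma Q_eq:
  assumes t: "0 \<le> t"
  shows "integral\<^sup>L std_gauss (\<lambda>x. if t \<le> \<bar>x\<bar> then 1 else 0) = 1 - integral {0..t} (\<lambda>x. 2 * phi x)"
proof -
  have gen: "integral\<^sup>L std_gauss (\<lambda>x. if s \<le> \<bar>x\<bar> then 1 else 0) = integral {s..} (\<lambda>x. 2 * phi x)"
    if s: "0 \<le> s" for s
  proof -
    have int: "integrable lborel (\<lambda>x. phi x * (if s \<le> \<bar>x\<bar> then (\<lambda>_. 1::real) \<bar>x\<bar> else 0))"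
      by (rule Bochner_Integration.integrable_bound[where f=phi]) (auto intro!: AE_I2)
    have "integral\<^sup>L std_gauss (\<lambda>x. if s \<le> \<bar>x\<bar> then (\<lambda>_. 1::real) \<bar>x\<bar> else 0)
        = (\<integral>x. indicator {s..} x * (2 * phi x * 1) \<partial>lborel)"
      by (rule E_rad[OF _ s int]) simp
    also have "\<dots> = integral {s..} (\<lambda>x. 2 * phi x)"
      using LINT_H(1)[OF setint_phi_sub[of "{s..}"]] s by simp
    finally show ?thesis by simp
  qed
  interpret G: prob_space std_gauss by (rule prob_space_std_gauss)
  have one: "integral {0..} (\<lambda>x. 2 * phi x) = 1"
    using gen[of 0] G.prob_space by simp
  have "integral {0..} (\<lambda>x. 2 * phi x) = integral {0..t} (\<lambda>x. 2 * phi x) + integral {t..} (\<lambda>x. 2 * phi x)"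
    by (rule split_H[OF setint_phi _ t]) simp
  then show ?thesis using gen[OF t] one by simp
qed

context
  fixes p :: real
  assumes p: "0 < p" "p \<le> 1"
begin

lemma EG_eq:
  assumes t: "0 \<le> t"
  shows "integral\<^sup>L std_gauss (\<lambda>x. if t \<le> \<bar>x\<bar> then \<bar>x\<bar> powr p else 0) = integral {t..} (\<lambda>x. x powr p * half_normal x)"
proof -
  have int: "integrable lborel (\<lambda>x. phi x * (if t \<le> \<bar>x\<bar> then (\<lambda>x. x powr p) \<bar>x\<bar> else 0))"
  proof (rule Bochner_Integration.integrable_bound[where f="\<lambda>x. phi x + phi x * \<bar>x\<bar> ^ 1"])
    show "integrable lborel (\<lambda>x. phi x + phi x * \<bar>x\<bar> ^ 1)"
      using integrable_std_normal_moment_abs[of 1] by auto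
    show "AE x in lborel. norm (phi x * (if t \<le> \<bar>x\<bar> then (\<lambda>x. x powr p) \<bar>x\<bar> else 0)) \<le> norm (phi x + phi x * \<bar>x\<bar> ^ 1)"
    proof (intro AE_I2)
      fix x :: real
      have "phi x * \<bar>x\<bar> powr p \<le> phi x * (1 + \<bar>x\<bar>)"
        by (intro mult_left_mono powr_le_lin p) simp
      then show "norm (phi x * (if t \<le> \<bar>x\<bar> then (\<lambda>x. x powr p) \<bar>x\<bar> else 0)) \<le> norm (phi x + phi x * \<bar>x\<bar> ^ 1)"
        by (auto simp: abs_mult algebra_simps)
    qed
  qed measurable
  have "integral\<^sup>L std_gauss (\<lambda>x. if t \<le> \<bar>x\<bar> then (\<lambda>x. x powr p) \<bar>x\<bar> else 0)
      = (\<integral>x. indicator {t..} x * (2 * phi x * x powr p) \<partial>lborel)"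
    by (rule E_rad[OF _ t int]) measurable
  also have "\<dots> = (\<integral>x. indicator {t..} x * (x powr p * half_normal x) \<partial>lborel)"
    by (simp add: hn_eq mult_ac)
  also have "\<dots> = integral {t..} (\<lambda>x. x powr p * half_normal x)"
    using LINT_H(1)[OF hh_si[OF p, of "{t..}"]] t by simp
  finally show ?thesis by simp
qed

end

lemma lin_le_big: "1 + \<bar>x::real\<bar> \<le> exp (10 + x\<^sup>2 / 4)"
proof -
  have "0 \<le> (\<bar>x\<bar> / 2 - 1)\<^sup>2" by simp
  then have "\<bar>x\<bar> \<le> 10 + x\<^sup>2 / 4" by (simp add: power2_eq_square field_simps)
  then have "exp \<bar>x\<bar> \<le> exp (10 + x\<^sup>2 / 4)" by simp
  moreover have "1 + \<bar>x\<bar> \<le> exp \<bar>x\<bar>" by (rule exp_ge_add_one_self)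
  ultimately show ?thesis by linarith
qed

lemma S_mean_eq:
  assumes p: "0 < p" "p \<le> 1"
  shows "S_mean p n = real n * integral {0..} (\<lambda>x. x powr p * half_normal x)"
proof -
  have Sr: "S_rho p n 1 \<omega> = (\<Sum>i<n. \<bar>\<omega> i\<bar> powr p)" for \<omega>
    unfolding S_rho_def by (simp add: sum_list_Ys)
  have F[measurable]: "(\<lambda>x::real. \<bar>x\<bar> powr p) \<in> borel_measurable borel" by measurable
  have Fi: "integrable std_gauss (\<lambda>x::real. \<bar>x\<bar> powr p)"
    by (rule intg_bound[OF F]) (use powr_le_lin[OF p] lin_le_big in \<open>auto intro: order.trans\<close>)
  have EF: "integral\<^sup>L std_gauss (\<lambda>x::real. \<bar>x\<bar> powr p) = integral {0..} (\<lambda>x. x powr p * half_normal x)"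
    using EG_eq[OF p, of 0] by simp
  have comp: "integral\<^sup>L (gauss_vec n) (\<lambda>\<omega>. \<bar>\<omega> i\<bar> powr p) = integral\<^sup>L std_gauss (\<lambda>x::real. \<bar>x\<bar> powr p)"
    and compi: "integrable (gauss_vec n) (\<lambda>\<omega>. \<bar>\<omega> i\<bar> powr p)" if i: "i < n" for i
  proof -
    have d: "distr (gauss_vec n) std_gauss (\<lambda>\<omega>. \<omega> i) = std_gauss"
      unfolding gauss_vec_def using i by (intro distr_PiM_component prob_space_std_gauss) auto
    have m: "(\<lambda>\<omega>. \<omega> i) \<in> measurable (gauss_vec n) std_gauss"
      unfolding gauss_vec_def using i by (intro measurable_component_singleton) auto
    have F': "(\<lambda>x::real. \<bar>x\<bar> powr p) \<in> borel_measurable std_gauss" by (simp add: std_gauss_def)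
    show "integral\<^sup>L (gauss_vec n) (\<lambda>\<omega>. \<bar>\<omega> i\<bar> powr p) = integral\<^sup>L std_gauss (\<lambda>x::real. \<bar>x\<bar> powr p)"
      using integral_distr[OF m F'] d by simp
    show "integrable (gauss_vec n) (\<lambda>\<omega>. \<bar>\<omega> i\<bar> powr p)"
      using integrable_distr_eq[OF m F'] d Fi by simp
  qed
  have "S_mean p n = integral\<^sup>L (gauss_vec n) (\<lambda>\<omega>. \<Sum>i<n. \<bar>\<omega> i\<bar> powr p)"
    unfolding S_mean_def Sr ..
  also have "\<dots> = (\<Sum>i<n. integral\<^sup>L (gauss_vec n) (\<lambda>\<omega>. \<bar>\<omega> i\<bar> powr p))"
    by (rule Bochner_Integration.integral_sum[where f="\<lambda>i \<omega>. \<bar>\<omega> i\<bar> powr p"]) (auto intro: compi)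
  also have "\<dots> = (\<Sum>i<n. integral {0..} (\<lambda>x. x powr p * half_normal x))"
    by (intro sum.cong) (auto simp: comp EF)
  finally show ?thesis by simp
qed

lemma card_filter_sum:
  "(\<Sum>i<(n::nat). (if P i then 1 else 0::real)) = real (card {i\<in>{..<n}. P i})"
proof (induction n)
  case (Suc n)
  have "{i\<in>{..<Suc n}. P i} = {i\<in>{..<n}. P i} \<union> (if P n then {n} else {})"
    by (auto simp: less_Suc_eq)
  then show ?case using Suc by (auto simp: card_insert_if)
qed simp

theorem corollary1:
  fixes p \<rho> :: real
  assumes "0 < p" and "p \<le> 1" and "\<rho> < rhostar p"
  shows "\<exists>\<delta>>0. \<exists>c2>0. \<exists>N. \<forall>n\<ge>N.
           measure (gauss_vec n) {\<omega> \<in> space (gauss_vec n). S_rho p n \<rho> \<omega> \<le> (1/2 - \<delta>) * S_mean p n}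
             \<ge> 1 - 2 * exp (- c2 * real n)"
proof -
  have p: "0 < p" "p \<le> 1" using assms by auto
  interpret G: prob_space std_gauss by (rule prob_space_std_gauss)
  define \<mu> where "\<mu> = integral {0..} (\<lambda>x. x powr p * half_normal x)"
  have mu: "0 < \<mu>" unfolding \<mu>_def by (rule mu_pos[OF p])
  define z where "z = zstar p"
  have z0: "0 < z" using zstar_prop[OF p] by (simp add: z_def)
  define I where "I = (\<lambda>t. integral {0..t} (\<lambda>x. 2 * phi x))"
  have rs: "rhostar p = 1 - I z"
    unfolding rhostar_def I_def z_def using erf_eq[of "zstar p"] z0 z_def by simp
  have cont: "continuous_on {0..z+1} I"
    unfolding I_def
    by (rule indefinite_integral_continuous_1[OF LINT_H(2)[OF setint_phi_sub]]) auto
  obtain t where t: "z < t" "1 - I t > \<rho>"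
  proof -
    define e where "e = rhostar p - \<rho>"
    have e: "e > 0" using assms by (simp add: e_def)
    obtain d where d: "d > 0" "\<And>x'. x' \<in> {0..z+1} \<Longrightarrow> dist x' z < d \<Longrightarrow> dist (I x') (I z) < e"
      using cont[unfolded continuous_on_iff] z0 e by (metis atLeastAtMost_iff less_add_one less_eq_real_def)
    define t where "t = z + min (d/2) 1"
    have "t \<in> {0..z+1}" "dist t z < d" using z0 d by (auto simp: t_def dist_real_def)
    then have "dist (I t) (I z) < e" by (rule d(2))
    then have "1 - I t > \<rho>" using rs by (auto simp: e_def dist_real_def)
    moreover have "z < t" using d by (simp add: t_def)
    ultimately show ?thesis using that by blast
  qed
  have t0: "0 < t" using t z0 by simp
  define q where "q = 1 - I t"
  have q: "\<rho> < q" using t by (simp add: q_def)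
  define a where "a = integral {t..} (\<lambda>x. x powr p * half_normal x)"
  have a_lt: "a < \<mu> / 2" unfolding a_def \<mu>_def using tail_lt_half[OF p] t z_def by simp
  define g1 where "g1 = (\<lambda>x::real. - (if t \<le> \<bar>x\<bar> then 1 else (0::real)))"
  define g2 where "g2 = (\<lambda>x::real. if t \<le> \<bar>x\<bar> then \<bar>x\<bar> powr p else 0)"
  have g1m[measurable]: "g1 \<in> borel_measurable borel" unfolding g1_def by measurable
  have g2m[measurable]: "g2 \<in> borel_measurable borel" unfolding g2_def by measurable
  have Eg1: "integral\<^sup>L std_gauss g1 = - q"
    unfolding g1_def q_def I_def using Q_eq[of t] t0 by simp
  have Eg2: "integral\<^sup>L std_gauss g2 = a"
    unfolding g2_def a_def using EG_eq[OF p, of t] t0 by simp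
  have g1b: "\<bar>g1 x\<bar> \<le> 1 + \<bar>x\<bar>" for x unfolding g1_def by auto
  have g2b: "\<bar>g2 x\<bar> \<le> 1 + \<bar>x\<bar>" for x unfolding g2_def using powr_le_lin[OF p, of x] by auto
  have int1: "integrable std_gauss (\<lambda>x. (g1 x)\<^sup>2 * exp \<bar>g1 x\<bar>)"
    by (rule intg_bound) (auto intro: big_bound[OF g1b])
  have int2: "integrable std_gauss (\<lambda>x. (g2 x)\<^sup>2 * exp \<bar>g2 x\<bar>)"
    by (rule intg_bound) (auto intro: big_bound[OF g2b])
  define \<eta>1 where "\<eta>1 = (q - \<rho>) / 2"
  define \<eta>2 where "\<eta>2 = (\<mu> / 2 - a) / 2"
  have e1: "\<eta>1 > 0" using q by (simp add: \<eta>1_def)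
  have e2: "\<eta>2 > 0" using a_lt by (simp add: \<eta>2_def)
  obtain c1 where c1: "c1 > 0" "\<And>n. measure (gauss_vec n)
     {\<omega> \<in> space (gauss_vec n). real n * (- q + \<eta>1) \<le> (\<Sum>i<n. g1 (\<omega> i))} \<le> exp (- c1 * real n)"
    using chernoff[OF g1m int1 e1] unfolding Eg1 by auto
  obtain c2 where c2: "c2 > 0" "\<And>n. measure (gauss_vec n)
     {\<omega> \<in> space (gauss_vec n). real n * (a + \<eta>2) \<le> (\<Sum>i<n. g2 (\<omega> i))} \<le> exp (- c2 * real n)"
    using chernoff[OF g2m int2 e2] unfolding Eg2 by auto
  define \<delta> where "\<delta> = (\<mu> / 2 - a) / (2 * \<mu>)"
  have \<delta>: "\<delta> > 0" using a_lt mu by (simp add: \<delta>_def)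
  have \<delta>eq: "(1/2 - \<delta>) * \<mu> = a + \<eta>2" using mu by (simp add: \<delta>_def \<eta>2_def field_simps)
  define c where "c = min c1 c2"
  have c: "c > 0" using c1 c2 by (simp add: c_def)
  define N where "N = nat \<lceil>2 / (q - \<rho>)\<rceil>"
  have main: "measure (gauss_vec n) {\<omega> \<in> space (gauss_vec n). S_rho p n \<rho> \<omega> \<le> (1/2 - \<delta>) * S_mean p n}
             \<ge> 1 - 2 * exp (- c * real n)" if nN: "n \<ge> N" for n
  proof -
    interpret P: prob_space "gauss_vec n" by (rule prob_space_gauss_vec)
    define E where "E = {\<omega> \<in> space (gauss_vec n). S_rho p n \<rho> \<omega> \<le> (1/2 - \<delta>) * S_mean p n}"
    define A1 where "A1 = {\<omega> \<in> space (gauss_vec n). real n * (- q + \<eta>1) \<le> (\<Sum>i<n. g1 (\<omega> i))}"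
    define A2 where "A2 = {\<omega> \<in> space (gauss_vec n). real n * (a + \<eta>2) \<le> (\<Sum>i<n. g2 (\<omega> i))}"
    have Em: "E \<in> sets (gauss_vec n)" unfolding E_def by (rule meas_Srho)
    have gim: "(\<lambda>\<omega>. \<Sum>i<n. g (\<omega> i)) \<in> borel_measurable (gauss_vec n)"
      if [measurable]: "g \<in> borel_measurable borel" for g :: "real \<Rightarrow> real"
    proof -
      have gi: "(\<lambda>\<omega>. g (\<omega> i)) \<in> borel_measurable (gauss_vec n)" if "i < n" for i
        by (rule measurable_compose[OF comp_meas[OF that]]) simp
      show ?thesis by (intro borel_measurable_sum gi) auto
    qed
    have A1m: "A1 \<in> sets (gauss_vec n)" unfolding A1_def
      by (intro borel_measurable_le gim) auto
    have A2m: "A2 \<in> sets (gauss_vec n)" unfolding A2_def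
      by (intro borel_measurable_le gim) auto
    have nq: "real n * (q - \<rho>) / 2 \<ge> 1"
    proof -
      have "2 / (q - \<rho>) \<le> real n" using nN unfolding N_def by linarith
      then show ?thesis using q by (simp add: field_simps)
    qed
    have sub: "space (gauss_vec n) - E \<subseteq> A1 \<union> A2"
    proof
      fix \<omega> assume w: "\<omega> \<in> space (gauss_vec n) - E"
      show "\<omega> \<in> A1 \<union> A2"
      proof (rule ccontr)
        assume nA: "\<omega> \<notin> A1 \<union> A2"
        define f where "f = (\<lambda>i. \<bar>\<omega> i\<bar> powr p)"
        define T where "T = t powr p"
        have equiv: "(T \<le> f i) \<longleftrightarrow> (t \<le> \<bar>\<omega> i\<bar>)" for i
        proof
          assume "t \<le> \<bar>\<omega> i\<bar>" then show "T \<le> f i" unfolding T_def f_def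
            using t0 p by (intro powr_mono2) auto
        next
          assume a: "T \<le> f i"
          show "t \<le> \<bar>\<omega> i\<bar>"
          proof (rule ccontr)
            assume "\<not> t \<le> \<bar>\<omega> i\<bar>"
            then have "f i < T" unfolding T_def f_def using p by (intro powr_less_mono2) auto
            then show False using a by simp
          qed
        qed
        define cnt where "cnt = card {i\<in>{..<n}. t \<le> \<bar>\<omega> i\<bar>}"
        have s1: "(\<Sum>i<n. g1 (\<omega> i)) = - real cnt"
          unfolding g1_def cnt_def by (simp add: sum_negf card_filter_sum)
        have "real n * (- q + \<eta>1) > - real cnt" using nA w s1 unfolding A1_def by auto
        then have cnt_gt: "real cnt > real n * (q + \<rho>) / 2" by (simp add: \<eta>1_def field_simps)
        define k where "k = nat \<lceil>\<rho> * real n\<rceil>"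
        have "real k \<le> max 0 (\<rho> * real n + 1)" unfolding k_def by linarith
        also have "\<dots> \<le> real cnt" using cnt_gt nq by (auto simp: field_simps)
        finally have kc: "k \<le> card {i\<in>{..<n}. T \<le> f i}" unfolding cnt_def equiv by simp
        have "S_rho p n \<rho> \<omega> = sum_list (take k (rev (sort (map f [0..<n]))))"
          unfolding S_rho_def Ys_def k_def f_def ..
        also have "\<dots> \<le> (\<Sum>i<n. if T \<le> f i then f i else 0)"
          by (rule topk_le[OF _ kc]) (simp add: f_def)
        also have "\<dots> = (\<Sum>i<n. g2 (\<omega> i))"
        proof -
          have equiv': "(T \<le> \<bar>\<omega> i\<bar> powr p) \<longleftrightarrow> t \<le> \<bar>\<omega> i\<bar>" for i
            using equiv[of i] by (simp add: f_def)
          show ?thesis unfolding g2_def f_def using equiv' by simp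
        qed
        also have "\<dots> < real n * (a + \<eta>2)" using nA w unfolding A2_def by auto
        also have "\<dots> = (1/2 - \<delta>) * S_mean p n"
          using S_mean_eq[OF p, of n] \<delta>eq unfolding \<mu>_def by simp
        finally show False using w unfolding E_def by auto
      qed
    qed
    have "P.prob (space (gauss_vec n) - E) \<le> P.prob (A1 \<union> A2)"
      using sub A1m A2m by (intro P.finite_measure_mono) auto
    also have "\<dots> \<le> P.prob A1 + P.prob A2" using A1m A2m by (rule measure_Un_le)
    also have "\<dots> \<le> exp (- c1 * real n) + exp (- c2 * real n)"
      using c1(2)[of n] c2(2)[of n] unfolding A1_def A2_def by linarith
    also have "\<dots> \<le> 2 * exp (- c * real n)"
    proof -
      have "exp (- c1 * real n) \<le> exp (- c * real n)" "exp (- c2 * real n) \<le> exp (- c * real n)"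
        by (auto simp: c_def intro!: mult_right_mono)
      then show ?thesis by linarith
    qed
    finally have "P.prob (space (gauss_vec n) - E) \<le> 2 * exp (- c * real n)" .
    moreover have "P.prob (space (gauss_vec n) - E) = 1 - P.prob E" using Em by (rule P.prob_compl)
    ultimately show ?thesis unfolding E_def by simp
  qed
  show ?thesis using \<delta> c main by blast
qed

end
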